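(* Assume Assumption A1(2) and Assumption A2 (see context), and let $0<\eta_s\le\eta_{\infty,2}$ for all $s$. Then for every $t\ge1$, \[\mathbb E^{1/2}\big[\|\tilde\theta^{(\mathrm{tr})}_t\|^2\big]\le\prod_{s=1}^t(1-\eta_sa)^{H_s}\|\theta_0-\theta_\star\|,\qquad\text{where }\ \tilde\theta^{(\mathrm{tr})}_t=\prod_{s=1}^t\Gamma^{\mathrm{avg}}_s(\theta_0-\theta_\star).\]
   Context: Setting: $N$ agents, dimension $d$. For each agent $c$: distribution $\pi_c$ on $(\mathsf Z,\mathcal Z)$, measurable $\mathbf A^c:\mathsf Z\to\mathbb R^{d\times d}$, $\mathbf b^c:\mathsf Z\to\mathbb R^d$, $\bar{\mathbf A}^c=\mathbb E_{\pi_c}[\mathbf A^c(Z)]$, $\bar{\mathbf b}^c=\mathbb E_{\pi_c}[\mathbf b^c(Z)]$; $\theta_\star$ solves $(N^{-1}\sum_c\bar{\mathbf A}^c)\theta_\star=N^{-1}\sum_c\bar{\mathbf b}^c$; $\theta^c_\star$ solves $\bar{\mathbf A}^c\theta^c_\star=\bar{\mathbf b}^c$; $\varepsilon^c(z)=(\mathbf A^c(z)-\bar{\mathbf A}^c)\theta^c_\star-(\mathbf b^c(z)-\bar{\mathbf b}^c)$. Assumption A1(p): each $-\bar{\mathbf A}^c$ Hurwitz; there exist $a>0,\eta_{\infty,p}>0$, $\eta_{\infty,p}a\le1/2$, with $\mathbb E^{1/p}_{Z\sim\pi_c}[\|(I-\eta\mathbf A^c(Z))u\|^p]\le(1-\eta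 a)\|u\|$ for all $0<\eta<\eta_{\infty,p}$, $u\in\mathbb R^d$. Assumption A2: samples $Z^c_{s,h}$ ($s\ge1$, $1\le h\le H_s$, $c\in[N]$) independent with $Z^c_{s,h}\sim\pi_c$; $\max_c\sup_z\|\varepsilon^c(z)\|<\infty$; $\max_c\sup_z\max(\|\mathbf A^c(z)\|,\|\mathbf A^c(z)-\bar{\mathbf A}^c\|)<\infty$. Given step sizes $\eta_s$ and local step numbers $H_s\in\mathbb N$: $\Gamma^c_{s,l:r}=(I-\eta_s\mathbf A^c(Z^c_{s,r}))\cdots(I-\eta_s\mathbf A^c(Z^c_{s,l}))$ ($=I$ if $l>r$), $\Gamma^c_s=\Gamma^c_{s,1:H_s}$, $\Gamma^{\mathrm{avg}}_s=N^{-1}\sum_c\Gamma^c_s$; $\prod_{s=1}^t\Gamma^{\mathrm{avg}}_s=\Gamma^{\mathrm{avg}}_t\cdots\Gamma^{\mathrm{avg}}_1$; $\theta_0\in\mathbb R^d$ is fixed. *)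

theory Defs
  imports "HOL-Probability.Probability"
begin

definition hurwitz :: "real^'n^'n \<Rightarrow> bool" where
  "hurwitz M \<longleftrightarrow>
     (\<forall>ev::complex. (\<exists>v::complex^'n. v \<noteq> 0 \<and>
         (\<chi> i j. complex_of_real (M$i$j)) *v v = ev *s v) \<longrightarrow> Re ev < 0)"

fun lprod :: "(nat \<Rightarrow> real^'n^'n) \<Rightarrow> nat \<Rightarrow> real^'n^'n" where
  "lprod F 0 = mat 1"
| "lprod F (Suc n) = F (Suc n) ** lprod F n"

definition Gamma_loc ::
  "(nat \<Rightarrow> 'z \<Rightarrow> real^'n^'n) \<Rightarrow> (nat \<Rightarrow> real) \<Rightarrow> (nat \<Rightarrow> nat)
   \<Rightarrow> (nat \<Rightarrow> nat \<Rightarrow> nat \<Rightarrow> 'z) \<Rightarrow> nat \<Rightarrow> nat \<Rightarrow> real^'n^'n" where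
  "Gamma_loc A \<eta> H Z c s = lprod (\<lambda>h. mat 1 - \<eta> s *\<^sub>R A c (Z c s h)) (H s)"

definition Gamma_avg ::
  "nat \<Rightarrow> (nat \<Rightarrow> 'z \<Rightarrow> real^'n^'n) \<Rightarrow> (nat \<Rightarrow> real) \<Rightarrow> (nat \<Rightarrow> nat)
   \<Rightarrow> (nat \<Rightarrow> nat \<Rightarrow> nat \<Rightarrow> 'z) \<Rightarrow> nat \<Rightarrow> real^'n^'n" where
  "Gamma_avg N A \<eta> H Z s = (1 / real N) *\<^sub>R (\<Sum>c<N. Gamma_loc A \<eta> H Z c s)"

end

theory Submission
  imports Defs
begin

lemma indep_step:
  fixes M :: "'w measure" and Mp :: "'i \<Rightarrow> 'z measure" and Zf :: "'i \<Rightarrow> 'w \<Rightarrow> 'z"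
  assumes M: "prob_space M" and ind: "prob_space.indep_vars M Mp Zf I"
    and K: "K \<subseteq> I" and k: "k \<in> I" "k \<notin> K"
    and dk: "distr M (Mp k) (Zf k) = Mp k"
    and f: "(\<lambda>p. f (fst p) (snd p)) \<in> borel_measurable (PiM K Mp \<Otimes>\<^sub>M Mp k)"
    and q: "q \<in> borel_measurable (PiM K Mp)"
    and bnd: "\<And>x. x \<in> space (PiM K Mp) \<Longrightarrow> (\<integral>\<^sup>+ z. f x z \<partial>Mp k) \<le> q x"
  shows "(\<integral>\<^sup>+ \<omega>. f (restrict (\<lambda>i. Zf i \<omega>) K) (Zf k \<omega>) \<partial>M) \<le> (\<integral>\<^sup>+ \<omega>. q (restrict (\<lambda>i. Zf i \<omega>) K) \<partial>M)"
proof -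
  interpret prob_space M by (rule M)
  define X where "X = (\<lambda>\<omega>. restrict (\<lambda>i. Zf i \<omega>) K)"
  define Y where "Y = (\<lambda>\<omega>. restrict (\<lambda>i. Zf i \<omega>) {k})"
  have iv: "indep_var (PiM K Mp) X (PiM {k} Mp) Y"
    unfolding X_def Y_def
    using k K by (intro indep_var_restrict[OF ind]) auto
  then have rvX: "random_variable (PiM K Mp) X" and rvY: "random_variable (PiM {k} Mp) Y"
    and eq: "distr M (PiM K Mp) X \<Otimes>\<^sub>M distr M (PiM {k} Mp) Y = distr M (PiM K Mp \<Otimes>\<^sub>M PiM {k} Mp) (\<lambda>x. (X x, Y x))"
    unfolding indep_var_distribution_eq by auto
  have rvk: "random_variable (Mp k) (Zf k)"
    using ind k unfolding indep_vars_def by auto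
  interpret PX: prob_space "distr M (PiM K Mp) X" by (rule prob_space_distr[OF rvX])
  interpret PY: prob_space "distr M (PiM {k} Mp) Y" by (rule prob_space_distr[OF rvY])
  interpret PXY: pair_sigma_finite "distr M (PiM K Mp) X" "distr M (PiM {k} Mp) Y"
    by unfold_locales
  have projk: "(\<lambda>g. g k) \<in> measurable (PiM {k} Mp) (Mp k)" by auto
  have f2: "(\<lambda>p. f (fst p) (snd p k)) \<in> borel_measurable (PiM K Mp \<Otimes>\<^sub>M PiM {k} Mp)"
  proof -
    have "(\<lambda>p. (fst p, snd p k)) \<in> measurable (PiM K Mp \<Otimes>\<^sub>M PiM {k} Mp) (PiM K Mp \<Otimes>\<^sub>M Mp k)"
      using projk by (intro measurable_Pair) auto
    from measurable_compose[OF this f] show ?thesis by simp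
  qed
  have "(\<integral>\<^sup>+ \<omega>. f (X \<omega>) (Zf k \<omega>) \<partial>M) = (\<integral>\<^sup>+ \<omega>. f (X \<omega>) (Y \<omega> k) \<partial>M)"
    by (simp add: Y_def)
  also have "\<dots> = (\<integral>\<^sup>+ p. f (fst p) (snd p k) \<partial>distr M (PiM K Mp \<Otimes>\<^sub>M PiM {k} Mp) (\<lambda>x. (X x, Y x)))"
    using f2 rvX rvY by (subst nn_integral_distr) (auto intro: measurable_Pair)
  also have "\<dots> = (\<integral>\<^sup>+ p. f (fst p) (snd p k) \<partial>(distr M (PiM K Mp) X \<Otimes>\<^sub>M distr M (PiM {k} Mp) Y))"
    by (simp add: eq)
  also have "\<dots> = (\<integral>\<^sup>+ x. \<integral>\<^sup>+ y. f x (y k) \<partial>distr M (PiM {k} Mp) Y \<partial>distr M (PiM K Mp) X)"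
  proof -
    have f3: "(\<lambda>p. f (fst p) (snd p k)) \<in> borel_measurable (distr M (PiM K Mp) X \<Otimes>\<^sub>M distr M (PiM {k} Mp) Y)"
      by (subst measurable_cong_sets[OF sets_pair_measure_cong[OF sets_distr sets_distr] refl]) (rule f2)
    from PY.nn_integral_fst[OF f3] show ?thesis by simp
  qed
  also have "\<dots> \<le> (\<integral>\<^sup>+ x. q x \<partial>distr M (PiM K Mp) X)"
  proof (intro nn_integral_mono)
    fix x assume x: "x \<in> space (distr M (PiM K Mp) X)"
    have fx: "f x \<in> borel_measurable (Mp k)"
      using measurable_compose_Pair1[OF _ f, of x] x by simp
    have "(\<integral>\<^sup>+ y. f x (y k) \<partial>distr M (PiM {k} Mp) Y) = (\<integral>\<^sup>+ \<omega>. f x (Y \<omega> k) \<partial>M)"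
      using rvY fx projk by (subst nn_integral_distr) auto
    also have "\<dots> = (\<integral>\<^sup>+ \<omega>. f x (Zf k \<omega>) \<partial>M)" by (simp add: Y_def)
    also have "\<dots> = (\<integral>\<^sup>+ z. f x z \<partial>distr M (Mp k) (Zf k))"
      using rvk fx by (subst nn_integral_distr) auto
    also have "\<dots> \<le> q x" using bnd x by (simp add: dk)
    finally show "(\<integral>\<^sup>+ y. f x (y k) \<partial>distr M (PiM {k} Mp) Y) \<le> q x" .
  qed
  also have "\<dots> = (\<integral>\<^sup>+ \<omega>. q (X \<omega>) \<partial>M)"
    using q rvX by (subst nn_integral_distr) auto
  finally show ?thesis unfolding X_def .
qed


lemma cont_mv: "continuous_on UNIV (\<lambda>p::(real^'n^'m) \<times> (real^'n). fst p *v snd p)"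
  unfolding matrix_vector_mult_def
  by (intro continuous_intros continuous_on_vec_lambda)
lemma mv_meas:
  fixes F :: "'a \<Rightarrow> real^'n^'m" and G :: "'a \<Rightarrow> real^'n"
  assumes "F \<in> borel_measurable Q" "G \<in> borel_measurable Q"
  shows "(\<lambda>x. F x *v G x) \<in> borel_measurable Q"
proof -
  have "(\<lambda>p::(real^'n^'m) \<times> (real^'n). fst p *v snd p) \<in> borel_measurable borel"
    using cont_mv by (rule borel_measurable_continuous_onI)
  then have "(\<lambda>p::(real^'n^'m) \<times> (real^'n). fst p *v snd p) \<in> borel_measurable (borel \<Otimes>\<^sub>M borel)"
    by (simp add: borel_prod)
  from measurable_compose[OF measurable_Pair[OF assms] this] show ?thesis by simp
qed
lemma mv_norm: "norm ((A::real^'n^'m) *v x) \<le> real CARD('m) * real CARD('n) * norm A * norm x"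
proof -
  have "onorm ((*v) A) \<le> real CARD('m) * real CARD('n) * norm A"
    by (rule onorm_le_matrix_component) (meson component_le_norm_cart Finite_Cartesian_Product.norm_nth_le order_trans)
  moreover have "norm (A *v x) \<le> onorm ((*v) A) * norm x" by (rule onorm) simp
  ultimately show ?thesis by (meson mult_right_mono norm_ge_zero order_trans)
qed

lemma A1_nn:
  fixes P :: "'z measure" and Ac :: "'z \<Rightarrow> real^'d^'d" and u :: "real^'d"
  assumes P: "prob_space P" and Am: "Ac \<in> borel_measurable P"
    and B: "\<And>z. z \<in> space P \<Longrightarrow> norm (Ac z) \<le> B"
    and a: "a > 0" and ei: "\<eta>inf > 0" "\<eta>inf * a \<le> 1/2"
    and A1: "\<And>e. 0 < e \<Longrightarrow> e < \<eta>inf \<Longrightarrow>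
               sqrt (\<integral>z. (norm ((mat 1 - e *\<^sub>R Ac z) *v u))\<^sup>2 \<partial>P) \<le> (1 - e * a) * norm u"
    and e: "0 < e" "e \<le> \<eta>inf"
  shows "(\<integral>\<^sup>+z. ennreal ((norm ((mat 1 - e *\<^sub>R Ac z) *v u))\<^sup>2) \<partial>P) \<le> ennreal ((1 - e * a)\<^sup>2 * (norm u)\<^sup>2)"
proof -
  interpret prob_space P by (rule P)
  define C where "C = real CARD('d) * real CARD('d)"
  have C0: "C \<ge> 0" by (simp add: C_def)
  have nb: "norm (Ac z *v u) \<le> C * B * norm u" if "z \<in> space P" for z
  proof -
    have "norm (Ac z *v u) \<le> C * norm (Ac z) * norm u" using mv_norm[of "Ac z" u] by (simp add: C_def)
    also have "\<dots> \<le> C * B * norm u" using B[OF that] C0 by (intro mult_right_mono mult_left_mono) auto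
    finally show ?thesis .
  qed
  have mw: "(\<lambda>z. Ac z *v u) \<in> borel_measurable P" by (intro mv_meas Am) simp
  have i1: "integrable P (\<lambda>z. u \<bullet> (Ac z *v u))"
  proof (rule integrable_const_bound[where B="norm u * (C * B * norm u)"])
    show "AE z in P. norm (u \<bullet> (Ac z *v u)) \<le> norm u * (C * B * norm u)"
    proof (intro AE_I2)
      fix z assume z: "z \<in> space P"
      have "norm (u \<bullet> (Ac z *v u)) \<le> norm u * norm (Ac z *v u)"
        using Cauchy_Schwarz_ineq2[of u "Ac z *v u"] by simp
      also have "\<dots> \<le> norm u * (C * B * norm u)"
        using nb[OF z] by (intro mult_left_mono) auto
      finally show "norm (u \<bullet> (Ac z *v u)) \<le> norm u * (C * B * norm u)" .
    qed
  qed (use mw in measurable)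
  have i2: "integrable P (\<lambda>z. (norm (Ac z *v u))\<^sup>2)"
  proof (rule integrable_const_bound[where B="(C * B * norm u)\<^sup>2"])
    show "AE z in P. norm ((norm (Ac z *v u))\<^sup>2) \<le> (C * B * norm u)\<^sup>2"
    proof (intro AE_I2)
      fix z assume z: "z \<in> space P"
      show "norm ((norm (Ac z *v u))\<^sup>2) \<le> (C * B * norm u)\<^sup>2"
        using nb[OF z] by (simp add: power_mono)
    qed
  qed (use mw in measurable)
  define \<alpha> where "\<alpha> = (\<integral>z. u \<bullet> (Ac z *v u) \<partial>P)"
  define \<beta> where "\<beta> = (\<integral>z. (norm (Ac z *v u))\<^sup>2 \<partial>P)"
  have expand: "(norm ((mat 1 - x *\<^sub>R Ac z) *v u))\<^sup>2 = (norm u)\<^sup>2 - 2 * x * (u \<bullet> (Ac z *v u)) + x\<^sup>2 * (norm (Ac z *v u))\<^sup>2"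
    for x z
  proof -
    have eq1: "(mat 1 - x *\<^sub>R Ac z) *v u = u - x *\<^sub>R (Ac z *v u)"
      by (simp add: matrix_vector_mult_diff_rdistrib scaleR_matrix_vector_assoc)
    have "(norm (u - x *\<^sub>R w))\<^sup>2 = (norm u)\<^sup>2 - 2 * x * (u \<bullet> w) + x\<^sup>2 * (norm w)\<^sup>2" for w :: "real^'d"
      unfolding power2_norm_eq_inner by (simp add: inner_diff_left inner_diff_right inner_commute power2_eq_square)
    then show ?thesis using eq1 by simp
  qed
  have int_eq: "integrable P (\<lambda>z. (norm ((mat 1 - x *\<^sub>R Ac z) *v u))\<^sup>2) \<and>
     (\<integral>z. (norm ((mat 1 - x *\<^sub>R Ac z) *v u))\<^sup>2 \<partial>P) = (norm u)\<^sup>2 - 2 * x * \<alpha> + x\<^sup>2 * \<beta>" for x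
  proof -
    have ii: "integrable P (\<lambda>z. (norm u)\<^sup>2 - 2 * x * (u \<bullet> (Ac z *v u)) + x\<^sup>2 * (norm (Ac z *v u))\<^sup>2)"
      using i1 i2 by auto
    have "(\<integral>z. (norm u)\<^sup>2 - 2 * x * (u \<bullet> (Ac z *v u)) + x\<^sup>2 * (norm (Ac z *v u))\<^sup>2 \<partial>P) = (norm u)\<^sup>2 - 2 * x * \<alpha> + x\<^sup>2 * \<beta>"
      using i1 i2 by (simp add: \<alpha>_def \<beta>_def prob_space)
    with ii show ?thesis by (simp add: expand)
  qed
  define q where "q x = (norm u)\<^sup>2 - 2 * x * \<alpha> + x\<^sup>2 * \<beta> - (1 - x * a)\<^sup>2 * (norm u)\<^sup>2" for x
  have qle: "q x \<le> 0" if "0 < x" "x < \<eta>inf" for x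
  proof -
    have nn: "0 \<le> (\<integral>z. (norm ((mat 1 - x *\<^sub>R Ac z) *v u))\<^sup>2 \<partial>P)" by simp
    have "(\<integral>z. (norm ((mat 1 - x *\<^sub>R Ac z) *v u))\<^sup>2 \<partial>P) = (sqrt (\<integral>z. (norm ((mat 1 - x *\<^sub>R Ac z) *v u))\<^sup>2 \<partial>P))\<^sup>2"
      using nn by simp
    also have "\<dots> \<le> ((1 - x * a) * norm u)\<^sup>2"
      using A1[OF that] by (intro power_mono) auto
    finally show ?thesis using int_eq[of x] by (simp add: q_def power_mult_distrib)
  qed
  have qe: "q e \<le> 0"
  proof (cases "e < \<eta>inf")
    case True then show ?thesis using qle e by auto
  next
    case False
    then have ee: "e = \<eta>inf" using e by auto
    have "(q \<longlongrightarrow> q \<eta>inf) (at_left \<eta>inf)"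
      unfolding q_def by (intro tendsto_intros)
    moreover have "eventually (\<lambda>x. q x \<le> 0) (at_left \<eta>inf)"
      using eventually_at_left_real[OF ei(1)] by eventually_elim (use qle in auto)
    ultimately show ?thesis using ee by (intro tendsto_upperbound[where F="at_left \<eta>inf"]) auto
  qed
  have "(\<integral>\<^sup>+z. ennreal ((norm ((mat 1 - e *\<^sub>R Ac z) *v u))\<^sup>2) \<partial>P) = ennreal ((norm u)\<^sup>2 - 2 * e * \<alpha> + e\<^sup>2 * \<beta>)"
    using int_eq[of e] by (subst nn_integral_eq_integral) auto
  also have "\<dots> \<le> ennreal ((1 - e * a)\<^sup>2 * (norm u)\<^sup>2)"
    using qe by (intro ennreal_leI) (simp add: q_def)
  finally show ?thesis .
qed

lemma sq_sum_le: fixes a :: "'i \<Rightarrow> real" assumes "finite C"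
  shows "(\<Sum>i\<in>C. a i)\<^sup>2 \<le> real (card C) * (\<Sum>i\<in>C. (a i)\<^sup>2)"
proof -
  have "(\<Sum>i\<in>C. a i)\<^sup>2 = (\<Sum>i\<in>C. \<Sum>j\<in>C. a i * a j)"
    by (simp add: power2_eq_square sum_product)
  also have "\<dots> \<le> (\<Sum>i\<in>C. \<Sum>j\<in>C. ((a i)\<^sup>2 + (a j)\<^sup>2) / 2)"
  proof (intro sum_mono)
    fix i j
    have "0 \<le> (a i - a j)\<^sup>2" by simp
    then show "a i * a j \<le> ((a i)\<^sup>2 + (a j)\<^sup>2) / 2" by (simp add: power2_diff)
  qed
  also have "\<dots> = real (card C) * (\<Sum>i\<in>C. (a i)\<^sup>2)"
    by (simp add: sum.distrib add_divide_distrib sum_divide_distrib[symmetric] sum_distrib_left[symmetric]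
         sum.swap[of "\<lambda>i j. (a j)\<^sup>2 / 2"] algebra_simps)
  finally show ?thesis .
qed

lemma avg_norm_sq:
  fixes y :: "nat \<Rightarrow> 'a::real_normed_vector"
  assumes N: "N \<ge> 1"
  shows "(norm ((1 / real N) *\<^sub>R (\<Sum>c<N. y c)))\<^sup>2 \<le> (\<Sum>c<N. (1 / real N) * (norm (y c))\<^sup>2)"
proof -
  have "(norm ((1 / real N) *\<^sub>R (\<Sum>c<N. y c)))\<^sup>2 = (1 / real N)\<^sup>2 * (norm (\<Sum>c<N. y c))\<^sup>2"
    by (simp add: power_divide)
  also have "\<dots> \<le> (1 / real N)\<^sup>2 * (\<Sum>c<N. norm (y c))\<^sup>2"
    by (intro mult_left_mono power_mono norm_sum) auto
  also have "\<dots> \<le> (1 / real N)\<^sup>2 * (real N * (\<Sum>c<N. (norm (y c))\<^sup>2))"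
    using sq_sum_le[of "{..<N}" "\<lambda>c. norm (y c)"] by (intro mult_left_mono) auto
  also have "\<dots> = (\<Sum>c<N. (1 / real N) * (norm (y c))\<^sup>2)"
    using N by (simp add: sum_distrib_left power2_eq_square)
  finally show ?thesis .
qed

locale fedset =
  fixes M :: "'w measure" and N :: nat and \<pi> :: "nat \<Rightarrow> 'z measure"
    and A :: "nat \<Rightarrow> 'z \<Rightarrow> real^'d^'d" and a \<eta>inf :: real and \<eta> :: "nat \<Rightarrow> real"
    and H :: "nat \<Rightarrow> nat" and Zs :: "nat \<Rightarrow> nat \<Rightarrow> nat \<Rightarrow> 'w \<Rightarrow> 'z"
  assumes M: "prob_space M"
    and N: "N \<ge> 1"
    and \<pi>: "\<And>c. c < N \<Longrightarrow> prob_space (\<pi> c)"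
    and A_meas: "\<And>c. c < N \<Longrightarrow> A c \<in> borel_measurable (\<pi> c)"
    and A_bdd: "\<exists>B. \<forall>c<N. \<forall>z\<in>space (\<pi> c). norm (A c z) \<le> B"
    and a_pos: "a > 0" and \<eta>inf_pos: "\<eta>inf > 0" and \<eta>inf_a: "\<eta>inf * a \<le> 1 / 2"
    and A1: "\<And>c e u. c < N \<Longrightarrow> 0 < e \<Longrightarrow> e < \<eta>inf \<Longrightarrow>
               sqrt (\<integral>z. (norm ((mat 1 - e *\<^sub>R A c z) *v u))\<^sup>2 \<partial>\<pi> c) \<le> (1 - e * a) * norm u"
    and Zs_meas: "\<And>c s h. c < N \<Longrightarrow> 1 \<le> s \<Longrightarrow> 1 \<le> h \<Longrightarrow> h \<le> H s \<Longrightarrow>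
               Zs c s h \<in> M \<rightarrow>\<^sub>M \<pi> c"
    and Zs_distr: "\<And>c s h. c < N \<Longrightarrow> 1 \<le> s \<Longrightarrow> 1 \<le> h \<Longrightarrow> h \<le> H s \<Longrightarrow>
               distr M (\<pi> c) (Zs c s h) = \<pi> c"
    and Zs_indep: "prob_space.indep_vars M (\<lambda>(c, s, h). \<pi> c) (\<lambda>(c, s, h). Zs c s h)
               {(c, s, h). c < N \<and> 1 \<le> s \<and> 1 \<le> h \<and> h \<le> H s}"
    and \<eta>: "\<And>s. 1 \<le> s \<Longrightarrow> 0 < \<eta> s \<and> \<eta> s \<le> \<eta>inf"
begin

abbreviation "Mp \<equiv> (\<lambda>(c, s, h). \<pi> c)"
abbreviation "Zf \<equiv> (\<lambda>(c, s, h). Zs c s h)"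
abbreviation "I \<equiv> {(c, s, h). c < N \<and> 1 \<le> s \<and> 1 \<le> h \<and> h \<le> H s}"

definition meason :: "(nat \<times> nat \<times> nat) set \<Rightarrow> ('w \<Rightarrow> real^'d) \<Rightarrow> bool" where
  "meason K X \<longleftrightarrow> (\<exists>g \<in> borel_measurable (PiM K Mp). \<forall>\<omega>\<in>space M. X \<omega> = g (restrict (\<lambda>i. Zf i \<omega>) K))"

definition E :: "('w \<Rightarrow> real^'d) \<Rightarrow> ennreal" where
  "E X = (\<integral>\<^sup>+\<omega>. ennreal ((norm (X \<omega>))\<^sup>2) \<partial>M)"

lemma Zf_meas: "i \<in> I \<Longrightarrow> Zf i \<in> M \<rightarrow>\<^sub>M Mp i"
  using Zs_meas by auto

lemma restr_meas: "K \<subseteq> I \<Longrightarrow> (\<lambda>\<omega>. restrict (\<lambda>i. Zf i \<omega>) K) \<in> M \<rightarrow>\<^sub>M PiM K Mp"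
  by (intro measurable_restrict Zf_meas) auto

lemma meason_meas: "meason K X \<Longrightarrow> K \<subseteq> I \<Longrightarrow> X \<in> borel_measurable M"
  unfolding meason_def
proof (elim bexE)
  fix g assume g: "g \<in> borel_measurable (PiM K Mp)" and X: "\<forall>\<omega>\<in>space M. X \<omega> = g (restrict (\<lambda>i. Zf i \<omega>) K)"
  assume K: "K \<subseteq> I"
  have "(\<lambda>\<omega>. g (restrict (\<lambda>i. Zf i \<omega>) K)) \<in> borel_measurable M"
    using measurable_compose[OF restr_meas[OF K] g] .
  then show "X \<in> borel_measurable M" using X by (subst measurable_cong) auto
qed

lemma meason_cong: "meason K X \<Longrightarrow> (\<And>\<omega>. \<omega> \<in> space M \<Longrightarrow> X \<omega> = Y \<omega>) \<Longrightarrow> meason K Y"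
  unfolding meason_def by metis

lemma E_cong: "(\<And>\<omega>. \<omega> \<in> space M \<Longrightarrow> X \<omega> = Y \<omega>) \<Longrightarrow> E X = E Y"
  unfolding E_def by (intro nn_integral_cong) auto

lemma meason_const: "meason K (\<lambda>_. v)"
  unfolding meason_def by (intro bexI[of _ "\<lambda>_. v"]) auto

lemma meason_mono: "meason K X \<Longrightarrow> K \<subseteq> L \<Longrightarrow> meason L X"
  unfolding meason_def
proof (elim bexE)
  fix g assume g: "g \<in> borel_measurable (PiM K Mp)" and X: "\<forall>\<omega>\<in>space M. X \<omega> = g (restrict (\<lambda>i. Zf i \<omega>) K)"
  assume KL: "K \<subseteq> L"
  show "\<exists>g\<in>borel_measurable (Pi\<^sub>M L Mp). \<forall>\<omega>\<in>space M. X \<omega> = g (restrict (\<lambda>i. Zf i \<omega>) L)"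
  proof (intro bexI[of _ "\<lambda>f. g (restrict f K)"] ballI)
    show "(\<lambda>f. g (restrict f K)) \<in> borel_measurable (Pi\<^sub>M L Mp)"
      using measurable_compose[OF measurable_restrict_subset[OF KL] g] .
    fix \<omega> assume "\<omega> \<in> space M"
    moreover have "restrict (restrict (\<lambda>i. Zf i \<omega>) L) K = restrict (\<lambda>i. Zf i \<omega>) K"
      using KL by (auto simp: restrict_def fun_eq_iff)
    ultimately show "X \<omega> = g (restrict (restrict (\<lambda>i. Zf i \<omega>) L) K)"
      using X by simp
  qed
qed

lemma meason_sum:
  assumes "finite C" "\<And>c. c \<in> C \<Longrightarrow> meason K (Y c)"
  shows "meason K (\<lambda>\<omega>. r *\<^sub>R (\<Sum>c\<in>C. Y c \<omega>))"
proof -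
  from assms(2) have "\<forall>c\<in>C. \<exists>g \<in> borel_measurable (PiM K Mp). \<forall>\<omega>\<in>space M. Y c \<omega> = g (restrict (\<lambda>i. Zf i \<omega>) K)"
    unfolding meason_def by blast
  then obtain G where G: "\<And>c. c \<in> C \<Longrightarrow> G c \<in> borel_measurable (PiM K Mp)"
     "\<And>c \<omega>. c \<in> C \<Longrightarrow> \<omega> \<in> space M \<Longrightarrow> Y c \<omega> = G c (restrict (\<lambda>i. Zf i \<omega>) K)"
    by metis
  show ?thesis unfolding meason_def
  proof (intro bexI[of _ "\<lambda>f. r *\<^sub>R (\<Sum>c\<in>C. G c f)"] ballI)
    show "(\<lambda>f. r *\<^sub>R (\<Sum>c\<in>C. G c f)) \<in> borel_measurable (Pi\<^sub>M K Mp)"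
      using G(1) by (intro borel_measurable_scaleR borel_measurable_const borel_measurable_sum) auto
    fix \<omega> assume "\<omega> \<in> space M"
    then show "r *\<^sub>R (\<Sum>c\<in>C. Y c \<omega>) = r *\<^sub>R (\<Sum>c\<in>C. G c (restrict (\<lambda>i. Zf i \<omega>) K))"
      using G(2) by simp
  qed
qed

lemma one_step:
  assumes c: "c < N" "1 \<le> s" "1 \<le> h" "h \<le> H s" and K: "K \<subseteq> I" "(c,s,h) \<notin> K" and X: "meason K X"
  shows "meason (insert (c,s,h) K) (\<lambda>\<omega>. (mat 1 - \<eta> s *\<^sub>R A c (Zs c s h \<omega>)) *v X \<omega>)"
    and "E (\<lambda>\<omega>. (mat 1 - \<eta> s *\<^sub>R A c (Zs c s h \<omega>)) *v X \<omega>) \<le> ennreal ((1 - \<eta> s * a)\<^sup>2) * E X"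
proof -
  define e where "e = \<eta> s"
  have e: "0 < e" "e \<le> \<eta>inf" using \<eta>[OF c(2)] by (auto simp: e_def)
  from X obtain g where g: "g \<in> borel_measurable (PiM K Mp)"
    and Xg: "\<And>\<omega>. \<omega> \<in> space M \<Longrightarrow> X \<omega> = g (restrict (\<lambda>i. Zf i \<omega>) K)"
    unfolding meason_def by blast
  have FA: "(\<lambda>z. mat 1 - e *\<^sub>R A c z) \<in> borel_measurable (\<pi> c)"
    using A_meas[OF c(1)] by measurable
  have comp: "(\<lambda>f. f (c,s,h)) \<in> PiM (insert (c,s,h) K) Mp \<rightarrow>\<^sub>M \<pi> c"
    using measurable_component_singleton[of "(c,s,h)" "insert (c,s,h) K" Mp] by simp
  show "meason (insert (c,s,h) K) (\<lambda>\<omega>. (mat 1 - \<eta> s *\<^sub>R A c (Zs c s h \<omega>)) *v X \<omega>)"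
    unfolding meason_def
  proof (intro bexI[of _ "\<lambda>f. (mat 1 - e *\<^sub>R A c (f (c,s,h))) *v g (restrict f K)"] ballI)
    show "(\<lambda>f. (mat 1 - e *\<^sub>R A c (f (c,s,h))) *v g (restrict f K)) \<in> borel_measurable (PiM (insert (c,s,h) K) Mp)"
      using measurable_compose[OF comp FA] measurable_compose[OF measurable_restrict_subset[of K "insert (c,s,h) K"] g]
      by (intro mv_meas) auto
    fix \<omega> assume w: "\<omega> \<in> space M"
    have "restrict (restrict (\<lambda>i. Zf i \<omega>) (insert (c,s,h) K)) K = restrict (\<lambda>i. Zf i \<omega>) K"
      by (auto simp: restrict_def fun_eq_iff)
    then show "(mat 1 - \<eta> s *\<^sub>R A c (Zs c s h \<omega>)) *v X \<omega> =
      (mat 1 - e *\<^sub>R A c (restrict (\<lambda>i. Zf i \<omega>) (insert (c,s,h) K) (c,s,h))) *v g (restrict (restrict (\<lambda>i. Zf i \<omega>) (insert (c,s,h) K)) K)"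
      using Xg[OF w] by (simp add: e_def)
  qed
  obtain B where B: "\<And>z. z \<in> space (\<pi> c) \<Longrightarrow> norm (A c z) \<le> B"
    using A_bdd c(1) by blast
  have bnd: "(\<integral>\<^sup>+z. ennreal ((norm ((mat 1 - e *\<^sub>R A c z) *v u))\<^sup>2) \<partial>\<pi> c) \<le> ennreal ((1 - e * a)\<^sup>2 * (norm u)\<^sup>2)" for u
    by (rule A1_nn[OF \<pi>[OF c(1)] A_meas[OF c(1)] B a_pos \<eta>inf_pos \<eta>inf_a A1[OF c(1)] e])
  have kI: "(c,s,h) \<in> I" using c by auto
  have fm: "(\<lambda>p. ennreal ((norm ((mat 1 - e *\<^sub>R A c (snd p)) *v g (fst p)))\<^sup>2)) \<in> borel_measurable (PiM K Mp \<Otimes>\<^sub>M Mp (c,s,h))"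
  proof -
    have "(\<lambda>p. (mat 1 - e *\<^sub>R A c (snd p)) *v g (fst p)) \<in> borel_measurable (PiM K Mp \<Otimes>\<^sub>M \<pi> c)"
      using measurable_compose[OF measurable_snd FA] measurable_compose[OF measurable_fst g]
      by (intro mv_meas) auto
    then show ?thesis by simp
  qed
  have "E (\<lambda>\<omega>. (mat 1 - \<eta> s *\<^sub>R A c (Zs c s h \<omega>)) *v X \<omega>) =
     (\<integral>\<^sup>+\<omega>. (\<lambda>x z. ennreal ((norm ((mat 1 - e *\<^sub>R A c z) *v g x))\<^sup>2)) (restrict (\<lambda>i. Zf i \<omega>) K) (Zf (c,s,h) \<omega>) \<partial>M)"
    unfolding E_def by (intro nn_integral_cong) (simp add: Xg e_def)
  also have "\<dots> \<le> (\<integral>\<^sup>+\<omega>. (\<lambda>x. ennreal ((1 - e * a)\<^sup>2 * (norm (g x))\<^sup>2)) (restrict (\<lambda>i. Zf i \<omega>) K) \<partial>M)"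
  proof (rule indep_step[OF M Zs_indep K(1) kI K(2)])
    show "distr M (Mp (c,s,h)) (Zf (c,s,h)) = Mp (c,s,h)" using Zs_distr[OF c] by simp
    show "(\<lambda>p. ennreal ((norm ((mat 1 - e *\<^sub>R A c (snd p)) *v g (fst p)))\<^sup>2)) \<in> borel_measurable (PiM K Mp \<Otimes>\<^sub>M Mp (c,s,h))"
      by (rule fm)
    show "(\<lambda>x. ennreal ((1 - e * a)\<^sup>2 * (norm (g x))\<^sup>2)) \<in> borel_measurable (PiM K Mp)"
      using g by measurable
    fix x show "(\<integral>\<^sup>+z. ennreal ((norm ((mat 1 - e *\<^sub>R A c z) *v g x))\<^sup>2) \<partial>Mp (c,s,h)) \<le> ennreal ((1 - e * a)\<^sup>2 * (norm (g x))\<^sup>2)"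
      using bnd by simp
  qed
  also have "\<dots> = (\<integral>\<^sup>+\<omega>. ennreal ((1 - e * a)\<^sup>2) * ennreal ((norm (X \<omega>))\<^sup>2) \<partial>M)"
    by (intro nn_integral_cong) (simp add: Xg ennreal_mult)
  also have "\<dots> = ennreal ((1 - e * a)\<^sup>2) * E X"
    unfolding E_def using meason_meas[OF X K(1)] by (intro nn_integral_cmult) measurable
  finally show "E (\<lambda>\<omega>. (mat 1 - \<eta> s *\<^sub>R A c (Zs c s h \<omega>)) *v X \<omega>) \<le> ennreal ((1 - \<eta> s * a)\<^sup>2) * E X"
    by (simp add: e_def)
qed

lemma loc:
  assumes c: "c < N" "1 \<le> s" and K: "K \<subseteq> I" "\<And>j. (c,s,j) \<notin> K" and X: "meason K X"
  shows "h \<le> H s \<Longrightarrow> meason (K \<union> {(c,s,j) | j. 1 \<le> j \<and> j \<le> h}) (\<lambda>\<omega>. lprod (\<lambda>j. mat 1 - \<eta> s *\<^sub>R A c (Zs c s j \<omega>)) h *v X \<omega>)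
     \<and> E (\<lambda>\<omega>. lprod (\<lambda>j. mat 1 - \<eta> s *\<^sub>R A c (Zs c s j \<omega>)) h *v X \<omega>) \<le> ennreal (((1 - \<eta> s * a)\<^sup>2) ^ h) * E X"
proof (induction h)
  case 0
  have "K \<union> {(c,s,j) | j. 1 \<le> j \<and> j \<le> (0::nat)} = K" by auto
  then show ?case using X by simp
next
  case (Suc h)
  define K' where "K' = K \<union> {(c,s,j) | j. 1 \<le> j \<and> j \<le> h}"
  define Y where "Y = (\<lambda>\<omega>. lprod (\<lambda>j. mat 1 - \<eta> s *\<^sub>R A c (Zs c s j \<omega>)) h *v X \<omega>)"
  from Suc have IH: "meason K' Y" "E Y \<le> ennreal (((1 - \<eta> s * a)\<^sup>2) ^ h) * E X"
    unfolding K'_def Y_def by auto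
  have K'I: "K' \<subseteq> I" using K(1) Suc(2) c unfolding K'_def by auto
  have nk: "(c,s,Suc h) \<notin> K'" using K(2) unfolding K'_def by auto
  have c': "1 \<le> Suc h" "Suc h \<le> H s" using Suc(2) by auto
  note os = one_step[OF c c' K'I nk IH(1)]
  have feq: "(\<lambda>\<omega>. lprod (\<lambda>j. mat 1 - \<eta> s *\<^sub>R A c (Zs c s j \<omega>)) (Suc h) *v X \<omega>) =
     (\<lambda>\<omega>. (mat 1 - \<eta> s *\<^sub>R A c (Zs c s (Suc h) \<omega>)) *v Y \<omega>)"
    by (simp add: Y_def matrix_vector_mul_assoc)
  have seq: "K \<union> {(c,s,j) | j. 1 \<le> j \<and> j \<le> Suc h} = insert (c,s,Suc h) K'"
    unfolding K'_def by (auto simp: le_Suc_eq)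
  have "E (\<lambda>\<omega>. (mat 1 - \<eta> s *\<^sub>R A c (Zs c s (Suc h) \<omega>)) *v Y \<omega>) \<le> ennreal ((1 - \<eta> s * a)\<^sup>2) * E Y"
    by (rule os(2))
  also have "\<dots> \<le> ennreal ((1 - \<eta> s * a)\<^sup>2) * (ennreal (((1 - \<eta> s * a)\<^sup>2) ^ h) * E X)"
    using IH(2) by (intro mult_left_mono) auto
  also have "\<dots> = ennreal (((1 - \<eta> s * a)\<^sup>2) ^ Suc h) * E X"
    by (simp add: ennreal_mult'' mult.assoc)
  finally have e2: "E (\<lambda>\<omega>. (mat 1 - \<eta> s *\<^sub>R A c (Zs c s (Suc h) \<omega>)) *v Y \<omega>) \<le> ennreal (((1 - \<eta> s * a)\<^sup>2) ^ Suc h) * E X" .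
  show ?case unfolding seq feq using os(1) e2 by blast
qed

lemma sum_mv: "(\<Sum>c\<in>C. G c) *v x = (\<Sum>c\<in>C. G c *v x)" for G :: "nat \<Rightarrow> real^'d^'d"
  by (induction C rule: infinite_finite_induct) (auto simp: matrix_vector_mult_add_rdistrib)

lemma rounds:
  "meason {(c,s,h). c < N \<and> 1 \<le> s \<and> 1 \<le> h \<and> h \<le> H s \<and> s < Suc t}
      (\<lambda>\<omega>. lprod (\<lambda>s. Gamma_avg N A \<eta> H (\<lambda>c s h. Zs c s h \<omega>) s) t *v v)
   \<and> E (\<lambda>\<omega>. lprod (\<lambda>s. Gamma_avg N A \<eta> H (\<lambda>c s h. Zs c s h \<omega>) s) t *v v)
      \<le> ennreal ((\<Prod>s = 1..t. (1 - \<eta> s * a) ^ H s)\<^sup>2 * (norm v)\<^sup>2)"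
proof (induction t)
  case 0
  interpret prob_space M by (rule M)
  show ?case by (simp add: meason_const E_def emeasure_space_1)
next
  case (Suc t)
  define Ks where "Ks = {(c,s,h). c < N \<and> 1 \<le> s \<and> 1 \<le> h \<and> h \<le> H s \<and> s < Suc t}"
  define Ks' where "Ks' = {(c,s,h). c < N \<and> 1 \<le> s \<and> 1 \<le> h \<and> h \<le> H s \<and> s < Suc (Suc t)}"
  define X where "X = (\<lambda>\<omega>. lprod (\<lambda>s. Gamma_avg N A \<eta> H (\<lambda>c s h. Zs c s h \<omega>) s) t *v v)"
  define P where "P = (\<Prod>s = 1..t. (1 - \<eta> s * a) ^ H s)"
  define r where "r = (1 - \<eta> (Suc t) * a)\<^sup>2"
  have IH: "meason Ks X" "E X \<le> ennreal (P\<^sup>2 * (norm v)\<^sup>2)"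
    using Suc unfolding Ks_def X_def P_def by auto
  define Y where "Y = (\<lambda>c \<omega>. lprod (\<lambda>j. mat 1 - \<eta> (Suc t) *\<^sub>R A c (Zs c (Suc t) j \<omega>)) (H (Suc t)) *v X \<omega>)"
  have KsI: "Ks \<subseteq> I" unfolding Ks_def by auto
  have Yc: "meason Ks' (Y c) \<and> E (Y c) \<le> ennreal (r ^ H (Suc t)) * E X" if c: "c < N" for c
  proof -
    have "meason (Ks \<union> {(c,Suc t,j) | j. 1 \<le> j \<and> j \<le> H (Suc t)}) (Y c) \<and> E (Y c) \<le> ennreal (r ^ H (Suc t)) * E X"
      unfolding Y_def r_def by (rule loc[OF c _ KsI _ IH(1)]) (auto simp: Ks_def)
    moreover have "Ks \<union> {(c,Suc t,j) | j. 1 \<le> j \<and> j \<le> H (Suc t)} \<subseteq> Ks'"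
      using c unfolding Ks_def Ks'_def by auto
    ultimately show ?thesis using meason_mono by blast
  qed
  have Xeq: "lprod (\<lambda>s. Gamma_avg N A \<eta> H (\<lambda>c s h. Zs c s h \<omega>) s) (Suc t) *v v = (1 / real N) *\<^sub>R (\<Sum>c<N. Y c \<omega>)" for \<omega>
    by (simp add: Gamma_avg_def Gamma_loc_def Y_def X_def matrix_vector_mul_assoc[symmetric]
        scaleR_matrix_vector_assoc[symmetric] sum_mv)
  have m1: "meason Ks' (\<lambda>\<omega>. (1 / real N) *\<^sub>R (\<Sum>c<N. Y c \<omega>))"
    using Yc by (intro meason_sum) auto
  have KsI': "Ks' \<subseteq> I" unfolding Ks'_def by auto
  have Ymeas: "(\<lambda>\<omega>. ennreal ((1 / real N) * (norm (Y c \<omega>))\<^sup>2)) \<in> borel_measurable M" if "c < N" for c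
    using meason_meas[OF conjunct1[OF Yc[OF that]] KsI'] by measurable
  have "E (\<lambda>\<omega>. (1 / real N) *\<^sub>R (\<Sum>c<N. Y c \<omega>)) \<le> (\<integral>\<^sup>+\<omega>. (\<Sum>c<N. ennreal ((1 / real N) * (norm (Y c \<omega>))\<^sup>2)) \<partial>M)"
    unfolding E_def
  proof (intro nn_integral_mono)
    fix \<omega>
    have "ennreal ((norm ((1 / real N) *\<^sub>R (\<Sum>c<N. Y c \<omega>)))\<^sup>2) \<le> ennreal (\<Sum>c<N. (1 / real N) * (norm (Y c \<omega>))\<^sup>2)"
      by (intro ennreal_leI avg_norm_sq N)
    then show "ennreal ((norm ((1 / real N) *\<^sub>R (\<Sum>c<N. Y c \<omega>)))\<^sup>2) \<le> (\<Sum>c<N. ennreal ((1 / real N) * (norm (Y c \<omega>))\<^sup>2))"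
      by (subst sum_ennreal) auto
  qed
  also have "\<dots> = (\<Sum>c<N. ennreal (1 / real N) * E (Y c))"
    unfolding E_def
  proof (subst nn_integral_sum)
    show "\<And>c. c \<in> {..<N} \<Longrightarrow> (\<lambda>\<omega>. ennreal ((1 / real N) * (norm (Y c \<omega>))\<^sup>2)) \<in> borel_measurable M"
      using Ymeas by auto
    show "(\<Sum>c<N. \<integral>\<^sup>+ \<omega>. ennreal ((1 / real N) * (norm (Y c \<omega>))\<^sup>2) \<partial>M) =
        (\<Sum>c<N. ennreal (1 / real N) * (\<integral>\<^sup>+ \<omega>. ennreal ((norm (Y c \<omega>))\<^sup>2) \<partial>M))"
    proof (intro sum.cong refl)
      fix c assume "c \<in> {..<N}"
      then have "c < N" by simp
      then have "(\<lambda>\<omega>. ennreal ((norm (Y c \<omega>))\<^sup>2)) \<in> borel_measurable M"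
        using meason_meas[OF conjunct1[OF Yc] KsI'] by measurable
      then show "(\<integral>\<^sup>+ \<omega>. ennreal ((1 / real N) * (norm (Y c \<omega>))\<^sup>2) \<partial>M) =
          ennreal (1 / real N) * (\<integral>\<^sup>+ \<omega>. ennreal ((norm (Y c \<omega>))\<^sup>2) \<partial>M)"
        by (subst nn_integral_cmult[symmetric]) (auto simp: ennreal_mult[symmetric] simp del: ennreal_mult intro!: nn_integral_cong)
    qed
  qed
  also have "\<dots> \<le> (\<Sum>c<N. ennreal (1 / real N) * (ennreal (r ^ H (Suc t)) * E X))"
    using Yc by (intro sum_mono mult_left_mono) auto
  also have "\<dots> = (\<Sum>c<N. ennreal (1 / real N)) * (ennreal (r ^ H (Suc t)) * E X)"
    by (simp only: sum_distrib_right)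
  also have "(\<Sum>c<N. ennreal (1 / real N)) = ennreal (\<Sum>c<N. 1 / real N)"
    by (rule sum_ennreal) simp
  also have "(\<Sum>c<N. 1 / real N) = 1"
    using N by simp
  also have "ennreal 1 * (ennreal (r ^ H (Suc t)) * E X) = ennreal (r ^ H (Suc t)) * E X"
    by simp
  also have "\<dots> \<le> ennreal (r ^ H (Suc t)) * ennreal (P\<^sup>2 * (norm v)\<^sup>2)"
    using IH(2) by (intro mult_left_mono) auto
  also have "\<dots> = ennreal ((\<Prod>s = 1..Suc t. (1 - \<eta> s * a) ^ H s)\<^sup>2 * (norm v)\<^sup>2)"
  proof -
    define q where "q = (1 - \<eta> (Suc t) * a) ^ H (Suc t)"
    have pe: "(\<Prod>s = 1..Suc t. (1 - \<eta> s * a) ^ H s) = P * q"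
      unfolding P_def q_def by (rule prod.cl_ivl_Suc[THEN trans]) simp
    have rq: "r ^ H (Suc t) = q\<^sup>2"
      unfolding r_def q_def by (simp add: power_mult[symmetric] mult.commute)
    have "ennreal (r ^ H (Suc t)) * ennreal (P\<^sup>2 * (norm v)\<^sup>2) = ennreal (q\<^sup>2 * (P\<^sup>2 * (norm v)\<^sup>2))"
      by (simp add: rq ennreal_mult'')
    also have "\<dots> = ennreal ((\<Prod>s = 1..Suc t. (1 - \<eta> s * a) ^ H s)\<^sup>2 * (norm v)\<^sup>2)"
      unfolding pe by (simp add: power_mult_distrib mult.commute mult.left_commute)
    finally show ?thesis .
  qed
  finally have "E (\<lambda>\<omega>. (1 / real N) *\<^sub>R (\<Sum>c<N. Y c \<omega>)) \<le> ennreal ((\<Prod>s = 1..Suc t. (1 - \<eta> s * a) ^ H s)\<^sup>2 * (norm v)\<^sup>2)" .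
  moreover have Xeq': "(\<lambda>\<omega>. lprod (\<lambda>s. Gamma_avg N A \<eta> H (\<lambda>c s h. Zs c s h \<omega>) s) (Suc t) *v v) = (\<lambda>\<omega>. (1 / real N) *\<^sub>R (\<Sum>c<N. Y c \<omega>))"
    by (rule ext) (rule Xeq)
  ultimately show ?case unfolding Xeq' using m1 unfolding Ks'_def by blast
qed

end

theorem lemma1:
  fixes M :: "'w measure"
    and N :: nat
    and \<pi> :: "nat \<Rightarrow> 'z measure"
    and A :: "nat \<Rightarrow> 'z \<Rightarrow> real^'d^'d"
    and b :: "nat \<Rightarrow> 'z \<Rightarrow> real^'d"
    and \<theta>star \<theta>0 :: "real^'d"
    and \<theta>c :: "nat \<Rightarrow> real^'d"
    and a \<eta>inf :: real
    and \<eta> :: "nat \<Rightarrow> real"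
    and H :: "nat \<Rightarrow> nat"
    and Zs :: "nat \<Rightarrow> nat \<Rightarrow> nat \<Rightarrow> 'w \<Rightarrow> 'z"
    and t :: nat
  defines "Abar \<equiv> \<lambda>c. \<integral>z. A c z \<partial>\<pi> c"
    and "bbar \<equiv> \<lambda>c. \<integral>z. b c z \<partial>\<pi> c"
    and "\<epsilon> \<equiv> \<lambda>c z. (A c z - (\<integral>y. A c y \<partial>\<pi> c)) *v \<theta>c c - (b c z - (\<integral>y. b c y \<partial>\<pi> c))"
  assumes M: "prob_space M"
    and N: "N \<ge> 1"
    and \<pi>: "\<And>c. c < N \<Longrightarrow> prob_space (\<pi> c)"
    and A_meas: "\<And>c. c < N \<Longrightarrow> A c \<in> borel_measurable (\<pi> c)"
    and b_meas: "\<And>c. c < N \<Longrightarrow> b c \<in> borel_measurable (\<pi> c)"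
    and b_int: "\<And>c. c < N \<Longrightarrow> integrable (\<pi> c) (b c)"
    and \<theta>star: "((1 / real N) *\<^sub>R (\<Sum>c<N. Abar c)) *v \<theta>star = (1 / real N) *\<^sub>R (\<Sum>c<N. bbar c)"
    and \<theta>c: "\<And>c. c < N \<Longrightarrow> Abar c *v \<theta>c c = bbar c"
    \<comment> \<open>Assumption A1(2)\<close>
    and hurw: "\<And>c. c < N \<Longrightarrow> hurwitz (- Abar c)"
    and a_pos: "a > 0" and \<eta>inf_pos: "\<eta>inf > 0" and \<eta>inf_a: "\<eta>inf * a \<le> 1 / 2"
    and A1: "\<And>c e u. c < N \<Longrightarrow> 0 < e \<Longrightarrow> e < \<eta>inf \<Longrightarrow>
               sqrt (\<integral>z. (norm ((mat 1 - e *\<^sub>R A c z) *v u))\<^sup>2 \<partial>\<pi> c) \<le> (1 - e * a) * norm u"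
    \<comment> \<open>Assumption A2\<close>
    and Zs_meas: "\<And>c s h. c < N \<Longrightarrow> 1 \<le> s \<Longrightarrow> 1 \<le> h \<Longrightarrow> h \<le> H s \<Longrightarrow>
               Zs c s h \<in> M \<rightarrow>\<^sub>M \<pi> c"
    and Zs_distr: "\<And>c s h. c < N \<Longrightarrow> 1 \<le> s \<Longrightarrow> 1 \<le> h \<Longrightarrow> h \<le> H s \<Longrightarrow>
               distr M (\<pi> c) (Zs c s h) = \<pi> c"
    and Zs_indep: "prob_space.indep_vars M (\<lambda>(c, s, h). \<pi> c) (\<lambda>(c, s, h). Zs c s h)
               {(c, s, h). c < N \<and> 1 \<le> s \<and> 1 \<le> h \<and> h \<le> H s}"
    and eps_bdd: "\<exists>B. \<forall>c<N. \<forall>z\<in>space (\<pi> c). norm (\<epsilon> c z) \<le> B"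
    and A_bdd: "\<exists>B. \<forall>c<N. \<forall>z\<in>space (\<pi> c). max (norm (A c z)) (norm (A c z - Abar c)) \<le> B"
    \<comment> \<open>step sizes\<close>
    and \<eta>: "\<And>s. 1 \<le> s \<Longrightarrow> 0 < \<eta> s \<and> \<eta> s \<le> \<eta>inf"
    and t: "t \<ge> 1"
  shows "sqrt (\<integral>\<omega>. (norm (lprod (\<lambda>s. Gamma_avg N A \<eta> H (\<lambda>c s h. Zs c s h \<omega>) s) t
                              *v (\<theta>0 - \<theta>star)))\<^sup>2 \<partial>M)
         \<le> (\<Prod>s = 1..t. (1 - \<eta> s * a) ^ H s) * norm (\<theta>0 - \<theta>star)"
proof -
  have Abdd': "\<exists>B. \<forall>c<N. \<forall>z\<in>space (\<pi> c). norm (A c z) \<le> B"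
    using A_bdd by (meson max.bounded_iff)
  have "fedset M N \<pi> A a \<eta>inf \<eta> H Zs"
    unfolding fedset_def
    using M N \<pi> A_meas Abdd' a_pos \<eta>inf_pos \<eta>inf_a A1 Zs_meas Zs_distr Zs_indep \<eta> by blast
  then interpret F: fedset M N \<pi> A a \<eta>inf \<eta> H Zs .
  define v where "v = \<theta>0 - \<theta>star"
  define X where "X = (\<lambda>\<omega>. lprod (\<lambda>s. Gamma_avg N A \<eta> H (\<lambda>c s h. Zs c s h \<omega>) s) t *v v)"
  define P where "P = (\<Prod>s = 1..t. (1 - \<eta> s * a) ^ H s)"
  have R: "F.meason {(c,s,h). c < N \<and> 1 \<le> s \<and> 1 \<le> h \<and> h \<le> H s \<and> s < Suc t} X"
     "F.E X \<le> ennreal (P\<^sup>2 * (norm v)\<^sup>2)"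
    using F.rounds[of t v] unfolding X_def P_def by auto
  have Xm: "X \<in> borel_measurable M"
    by (rule F.meason_meas[OF R(1)]) auto
  have P0: "P \<ge> 0"
    unfolding P_def
  proof (intro prod_nonneg zero_le_power)
    fix s assume "s \<in> {1..t}"
    then have "\<eta> s \<le> \<eta>inf" using \<eta> by auto
    then have "\<eta> s * a \<le> \<eta>inf * a" using a_pos by (intro mult_right_mono) auto
    then show "0 \<le> 1 - \<eta> s * a" using \<eta>inf_a by linarith
  qed
  have "(\<integral>\<omega>. (norm (X \<omega>))\<^sup>2 \<partial>M) = enn2real (F.E X)"
    unfolding F.E_def using Xm by (intro integral_eq_nn_integral) auto
  also have "\<dots> \<le> P\<^sup>2 * (norm v)\<^sup>2"
    using R(2) by (intro enn2real_leI) auto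
  finally have "sqrt (\<integral>\<omega>. (norm (X \<omega>))\<^sup>2 \<partial>M) \<le> sqrt ((P * norm v)\<^sup>2)"
    by (simp add: power_mult_distrib)
  also have "\<dots> = P * norm v" using P0 by simp
  finally show ?thesis unfolding X_def P_def v_def .
qed

end
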